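(* Let $X_{\Omega_1}$ and $X_{\Omega_2}$ be convex toric domains and assume there exists $r>0$ such that $X_{\Omega_1}\subset B^4(r)\subset X_{\Omega_2}$. Let $\{\Phi_t\}_{t\in[0,1]}\subset\mathrm{Sp}(4,\mathbb{R})$ be the loop \[\Phi_t(z_1,z_2)=\begin{cases}(e^{4\pi i t}z_1,z_2), & t\in[0,\tfrac12],\\ (z_1,e^{-4\pi i t}z_2), & t\in[\tfrac12,1].\end{cases}\] Then the loop $\{\varphi_t=\Phi_t|_{X_{\Omega_1}}\}_{t\in[0,1]}$ is contractible in $\mathrm{SympEmb}(X_{\Omega_1},X_{\Omega_2})$.
   Context: For $\Omega\subset\mathbb{R}^2_{\geq0}$, $X_\Omega=\{(z_1,z_2)\in\mathbb{C}^2 \mid \pi(|z_1|^2,|z_2|^2)\in\Omega\}$ with the restriction of $\omega_{\mathrm{std}}$. A convex toric domain is $X_\Omega$ with $\Omega=\{(x,y)\mid 0\le x\le a,\ 0\le y\le f(x)\}$ and $f:[0,a]\to\mathbb{R}_{\ge0}$ nonincreasing and concave. $B^4(r)=\{(z_1,z_2)\mid \pi|z_1|^2+\pi|z_2|^2\le r\}$. $\mathrm{SympEmb}(M,N)$ is the space of symplectic embeddings of $M$ into $N$. *)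

theory Defs
  imports "HOL-Analysis.Analysis"
begin

type_synonym C2 = "complex \<times> complex"

definition toric_domain :: "(real \<times> real) set \<Rightarrow> C2 set" where
  "toric_domain \<Omega> = {(z1, z2). (pi * (cmod z1)^2, pi * (cmod z2)^2) \<in> \<Omega>}"

definition convex_toric_domain :: "C2 set \<Rightarrow> bool" where
  "convex_toric_domain X \<longleftrightarrow>
     (\<exists>(a::real) (f::real \<Rightarrow> real).
        (\<forall>x\<in>{0..a}. f x \<ge> 0) \<and>
        (\<forall>x\<in>{0..a}. \<forall>y\<in>{0..a}. x \<le> y \<longrightarrow> f y \<le> f x) \<and>
        concave_on {0..a} f \<and>
        X = toric_domain {(x, y). 0 \<le> x \<and> x \<le> a \<and> 0 \<le> y \<and> y \<le> f x})"

definition ball4 :: "real \<Rightarrow> C2 set" where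
  "ball4 r = {(z1, z2). pi * (cmod z1)^2 + pi * (cmod z2)^2 \<le> r}"

text \<open>Standard symplectic form on C^2 (z = x + iy, omega = dx1/\dy1 + dx2/\dy2).\<close>
definition omega_std :: "C2 \<Rightarrow> C2 \<Rightarrow> real" where
  "omega_std u v = Im (cnj (fst u) * fst v) + Im (cnj (snd u) * snd v)"

fun dderiv :: "'a::real_normed_vector list \<Rightarrow> ('a \<Rightarrow> 'b::real_normed_vector) \<Rightarrow> 'a \<Rightarrow> 'b" where
  "dderiv [] f = f"
| "dderiv (v # vs) f = (\<lambda>x. frechet_derivative (dderiv vs f) (at x) v)"

text \<open>C^infinity on an open set: all iterated derivatives exist (hence are continuous).\<close>
definition smooth_on :: "'a::real_normed_vector set \<Rightarrow> ('a \<Rightarrow> 'b::real_normed_vector) \<Rightarrow> bool" where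
  "smooth_on U f \<longleftrightarrow> (\<forall>vs. \<forall>x\<in>U. dderiv vs f differentiable (at x))"

definition symp_emb :: "C2 set \<Rightarrow> C2 set \<Rightarrow> (C2 \<Rightarrow> C2) \<Rightarrow> bool" where
  "symp_emb X1 X2 \<phi> \<longleftrightarrow>
     (\<exists>U. open U \<and> X1 \<subseteq> U \<and> smooth_on U \<phi> \<and>
        (\<forall>x\<in>U. \<forall>u v. omega_std (frechet_derivative \<phi> (at x) u) (frechet_derivative \<phi> (at x) v)
                        = omega_std u v)) \<and>
     inj_on \<phi> X1 \<and> \<phi> ` X1 \<subseteq> X2"

text \<open>A family of symplectic embeddings parametrised by P is continuous in the C^infinity
  topology of SympEmb(X1,X2) (X1 compact): every iterated derivative, restricted to X1,
  depends jointly continuously on (parameter, point).\<close>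
definition symp_emb_family :: "'p::topological_space set \<Rightarrow> C2 set \<Rightarrow> C2 set \<Rightarrow> ('p \<Rightarrow> C2 \<Rightarrow> C2) \<Rightarrow> bool" where
  "symp_emb_family P X1 X2 H \<longleftrightarrow>
     (\<forall>p\<in>P. symp_emb X1 X2 (H p)) \<and>
     (\<forall>vs. continuous_on (P \<times> X1) (\<lambda>(p, z). dderiv vs (H p) z))"

definition contractible_loop_SympEmb :: "C2 set \<Rightarrow> C2 set \<Rightarrow> (real \<Rightarrow> C2 \<Rightarrow> C2) \<Rightarrow> bool" where
  "contractible_loop_SympEmb X1 X2 \<gamma> \<longleftrightarrow>
     (\<exists>H :: real \<times> real \<Rightarrow> C2 \<Rightarrow> C2.
        symp_emb_family ({0..1} \<times> {0..1}) X1 X2 H \<and>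
        (\<forall>t\<in>{0..1}. \<forall>z\<in>X1. H (0, t) z = \<gamma> t z) \<and>
        (\<forall>s\<in>{0..1}. \<forall>z\<in>X1. H (s, 0) z = H (s, 1) z) \<and>
        (\<forall>t\<in>{0..1}. \<forall>z\<in>X1. H (1, t) z = H (1, 0) z))"

definition Phi_loop :: "real \<Rightarrow> C2 \<Rightarrow> C2" where
  "Phi_loop t = (\<lambda>(z1, z2).
     if t \<le> 1/2 then (exp (\<i> * complex_of_real (4 * pi * t)) * z1, z2)
     else (z1, exp (- \<i> * complex_of_real (4 * pi * t)) * z2))"

end

theory Submission
  imports Defs
begin

definition Lm :: "complex \<Rightarrow> real \<Rightarrow> complex \<Rightarrow> C2 \<Rightarrow> C2" where
  "Lm \<alpha> b \<gamma> z = (\<alpha> * fst z - of_real b * \<gamma> * snd z, of_real b * fst z + cnj \<alpha> * \<gamma> * snd z)"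

lemma Lm_bl: "bounded_linear (Lm \<alpha> b \<gamma>)"
  unfolding Lm_def
  by (intro bounded_linear_Pair bounded_linear_add bounded_linear_sub
      bounded_linear_mult_right[THEN bounded_linear_compose] bounded_linear_fst bounded_linear_snd)

lemma Lm_deriv: "(Lm \<alpha> b \<gamma> has_derivative Lm \<alpha> b \<gamma>) (at x)"
  using Lm_bl bounded_linear_imp_has_derivative by blast

lemma Lm_fd: "frechet_derivative (Lm \<alpha> b \<gamma>) (at x) = Lm \<alpha> b \<gamma>"
  using Lm_deriv frechet_derivative_at by metis

lemma const_fd: "frechet_derivative (\<lambda>x::C2. c::C2) (at x) = (\<lambda>_. 0)"
  by (metis frechet_derivative_at has_derivative_const)

lemma dderiv_Lm:
  "dderiv vs (Lm \<alpha> b \<gamma>) = (case vs of [] \<Rightarrow> Lm \<alpha> b \<gamma> | [v] \<Rightarrow> (\<lambda>_. Lm \<alpha> b \<gamma> v) | _ \<Rightarrow> (\<lambda>_. 0))"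
proof (induction vs)
  case Nil then show ?case by simp
next
  case (Cons v vs)
  show ?case
  proof (cases vs)
    case Nil then show ?thesis by (simp add: Lm_fd)
  next
    case (Cons w ws)
    then show ?thesis using Cons.IH
      by (cases ws) (simp_all add: const_fd)
  qed
qed

lemma smooth_Lm: "smooth_on UNIV (Lm \<alpha> b \<gamma>)"
  unfolding smooth_on_def
proof (intro allI ballI)
  fix vs and x :: C2
  show "dderiv vs (Lm \<alpha> b \<gamma>) differentiable (at x)"
    unfolding dderiv_Lm
    using Lm_deriv[of \<alpha> b \<gamma> x] by (auto simp: differentiable_def intro: has_derivative_const split: list.splits)
qed

lemma herm_Lm:
  assumes "cnj \<alpha> * \<alpha> + (of_real b)^2 = 1" "cnj \<gamma> * \<gamma> = 1"
  shows "cnj (fst (Lm \<alpha> b \<gamma> u)) * fst (Lm \<alpha> b \<gamma> v) + cnj (snd (Lm \<alpha> b \<gamma> u)) * snd (Lm \<alpha> b \<gamma> v)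
     = cnj (fst u) * fst v + cnj (snd u) * snd v"
proof -
  have e: "cnj \<alpha> * \<alpha> = 1 - (of_real b)^2" using assms(1) by (simp add: algebra_simps)
  have "cnj (fst (Lm \<alpha> b \<gamma> u)) * fst (Lm \<alpha> b \<gamma> v) + cnj (snd (Lm \<alpha> b \<gamma> u)) * snd (Lm \<alpha> b \<gamma> v)
     = (cnj \<alpha> * \<alpha>) * (cnj (fst u) * fst v) + (of_real b)^2 * (cnj \<gamma> * \<gamma>) * (cnj (snd u) * snd v)
       + (of_real b)^2 * (cnj (fst u) * fst v) + (cnj \<alpha> * \<alpha>) * (cnj \<gamma> * \<gamma>) * (cnj (snd u) * snd v)"
    unfolding Lm_def by (simp add: algebra_simps power2_eq_square)
  also have "\<dots> = cnj (fst u) * fst v + cnj (snd u) * snd v"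
    unfolding e assms(2) by (simp add: algebra_simps)
  finally show ?thesis .
qed

lemma omega_Lm:
  assumes "cnj \<alpha> * \<alpha> + (of_real b)^2 = 1" "cnj \<gamma> * \<gamma> = 1"
  shows "omega_std (Lm \<alpha> b \<gamma> u) (Lm \<alpha> b \<gamma> v) = omega_std u v"
proof -
  have "Im (cnj (fst (Lm \<alpha> b \<gamma> u)) * fst (Lm \<alpha> b \<gamma> v) + cnj (snd (Lm \<alpha> b \<gamma> u)) * snd (Lm \<alpha> b \<gamma> v))
     = Im (cnj (fst u) * fst v + cnj (snd u) * snd v)" using herm_Lm[OF assms] by simp
  then show ?thesis unfolding omega_std_def by simp
qed

lemma norm_Lm:
  assumes "cnj \<alpha> * \<alpha> + (of_real b)^2 = 1" "cnj \<gamma> * \<gamma> = 1"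
  shows "(cmod (fst (Lm \<alpha> b \<gamma> u)))^2 + (cmod (snd (Lm \<alpha> b \<gamma> u)))^2 = (cmod (fst u))^2 + (cmod (snd u))^2"
proof -
  have "complex_of_real ((cmod (fst (Lm \<alpha> b \<gamma> u)))^2 + (cmod (snd (Lm \<alpha> b \<gamma> u)))^2)
      = complex_of_real ((cmod (fst u))^2 + (cmod (snd u))^2)"
    using herm_Lm[OF assms, of u u] unfolding of_real_add complex_norm_square
    by (simp add: mult.commute)
  then show ?thesis using of_real_eq_iff by blast
qed

lemma Lm_diff: "Lm \<alpha> b \<gamma> u - Lm \<alpha> b \<gamma> v = Lm \<alpha> b \<gamma> (u - v)"
  unfolding Lm_def by (simp add: algebra_simps)

lemma inj_Lm:
  assumes "cnj \<alpha> * \<alpha> + (of_real b)^2 = 1" "cnj \<gamma> * \<gamma> = 1"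
  shows "inj (Lm \<alpha> b \<gamma>)"
proof (rule injI)
  fix u v assume "Lm \<alpha> b \<gamma> u = Lm \<alpha> b \<gamma> v"
  then have "Lm \<alpha> b \<gamma> (u - v) = 0" using Lm_diff by (metis right_minus_eq)
  then have "(cmod (fst (u - v)))^2 + (cmod (snd (u - v)))^2 = 0"
    using norm_Lm[OF assms, of "u - v"] by simp
  then have "fst (u - v) = 0" "snd (u - v) = 0"
    by (smt (verit) norm_eq_zero power2_less_eq_zero_iff zero_le_power2)+
  then show "u = v" by (simp add: prod_eq_iff)
qed


definition aa :: "real \<times> real \<Rightarrow> real" where
  "aa p = (1 - fst p) * min (2 * snd p) 1 + fst p * snd p"
definition bb :: "real \<times> real \<Rightarrow> real" where
  "bb p = (1 - fst p) * max (2 * snd p - 1) 0 + fst p * snd p"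
definition Hh :: "real \<times> real \<Rightarrow> C2 \<Rightarrow> C2" where
  "Hh p = Lm (of_real (cos (pi * fst p / 2)) * cis (2 * pi * aa p)) (sin (pi * fst p / 2))
            (cis (2 * pi * (aa p - bb p)))"

lemma cis_cnj_mult: "cnj (cis x) * cis x = 1"
  by (simp add: cis_cnj cis_mult)

lemma Hh_cond1:
  "cnj (of_real (cos (pi * fst p / 2)) * cis (2 * pi * aa p)) * (of_real (cos (pi * fst p / 2)) * cis (2 * pi * aa p))
   + (of_real (sin (pi * fst p / 2)))^2 = 1"
proof -
  have "cnj (of_real (cos (pi * fst p / 2)) * cis (2 * pi * aa p)) * (of_real (cos (pi * fst p / 2)) * cis (2 * pi * aa p))
     = of_real ((cos (pi * fst p / 2))^2) * (cnj (cis (2 * pi * aa p)) * cis (2 * pi * aa p))"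
    by (simp add: power2_eq_square algebra_simps)
  also have "\<dots> = of_real ((cos (pi * fst p / 2))^2)" by (simp add: cis_cnj_mult)
  finally have eq: "cnj (of_real (cos (pi * fst p / 2)) * cis (2 * pi * aa p)) * (of_real (cos (pi * fst p / 2)) * cis (2 * pi * aa p))
     = of_real ((cos (pi * fst p / 2))^2)" .
  show ?thesis unfolding eq using sin_cos_squared_add2[of "pi * fst p / 2"]
    by (metis of_real_1 of_real_add of_real_power)
qed

lemma Hh_cond2: "cnj (cis (2 * pi * (aa p - bb p))) * cis (2 * pi * (aa p - bb p)) = 1"
  by (rule cis_cnj_mult)

lemma Hh_symp:
  assumes "X1 \<subseteq> ball4 r" "ball4 r \<subseteq> X2"
  shows "symp_emb X1 X2 (Hh p)"
  unfolding symp_emb_def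
proof (intro conjI)
  show "\<exists>U. open U \<and> X1 \<subseteq> U \<and> smooth_on U (Hh p) \<and>
      (\<forall>x\<in>U. \<forall>u v. omega_std (frechet_derivative (Hh p) (at x) u) (frechet_derivative (Hh p) (at x) v) = omega_std u v)"
    by (rule exI[of _ UNIV]) (simp add: Hh_def smooth_Lm Lm_fd omega_Lm[OF Hh_cond1 Hh_cond2])
  show "inj_on (Hh p) X1"
    unfolding Hh_def using inj_Lm[OF Hh_cond1 Hh_cond2] by (metis inj_on_subset subset_UNIV)
  show "Hh p ` X1 \<subseteq> X2"
  proof
    fix w assume "w \<in> Hh p ` X1"
    then obtain z where z: "z \<in> X1" "w = Hh p z" by auto
    have "z \<in> ball4 r" using z assms by auto
    then have "pi * (cmod (fst z))^2 + pi * (cmod (snd z))^2 \<le> r" unfolding ball4_def by auto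
    moreover have "(cmod (fst w))^2 + (cmod (snd w))^2 = (cmod (fst z))^2 + (cmod (snd z))^2"
      unfolding z Hh_def by (rule norm_Lm[OF Hh_cond1 Hh_cond2])
    ultimately have "pi * (cmod (fst w))^2 + pi * (cmod (snd w))^2 \<le> r"
      by (metis distrib_left)
    then have "w \<in> ball4 r" unfolding ball4_def by (cases w) auto
    then show "w \<in> X2" using assms by auto
  qed
qed

lemma Hh_cont0: "continuous_on UNIV (\<lambda>q::(real \<times> real) \<times> C2. Hh (fst q) (snd q))"
  unfolding Hh_def Lm_def aa_def bb_def
  apply (intro continuous_on_Pair continuous_on_diff continuous_on_add continuous_on_mult continuous_on_cnj continuous_on_cis continuous_on_of_real continuous_on_sin continuous_on_cos continuous_on_min continuous_on_max continuous_on_const continuous_on_fst continuous_on_snd continuous_on_id continuous_on_divide)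
  apply simp_all
  done

lemma Hh_cont1: "continuous_on UNIV (\<lambda>q::(real \<times> real) \<times> C2. Hh (fst q) v)"
  unfolding Hh_def Lm_def aa_def bb_def
  apply (intro continuous_on_Pair continuous_on_diff continuous_on_add continuous_on_mult continuous_on_cnj continuous_on_cis continuous_on_of_real continuous_on_sin continuous_on_cos continuous_on_min continuous_on_max continuous_on_const continuous_on_fst continuous_on_snd continuous_on_id continuous_on_divide)
  apply simp_all
  done

lemma Hh_family:
  assumes "X1 \<subseteq> ball4 r" "ball4 r \<subseteq> X2"
  shows "symp_emb_family ({0..1} \<times> {0..1}) X1 X2 Hh"
  unfolding symp_emb_family_def
proof (intro conjI ballI allI)
  fix p show "symp_emb X1 X2 (Hh p)" using Hh_symp[OF assms] .
next
  fix vs :: "C2 list"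
  have "continuous_on UNIV (\<lambda>(p, z). dderiv vs (Hh p) z)"
  proof (cases vs)
    case Nil
    then show ?thesis using Hh_cont0 by (simp add: case_prod_beta)
  next
    case (Cons v ws)
    show ?thesis
    proof (cases ws)
      case Nil
      then show ?thesis using Hh_cont1[of v] \<open>vs = v # ws\<close>
        by (simp add: Hh_def dderiv_Lm case_prod_beta)
    next
      case (Cons w us)
      then show ?thesis using \<open>vs = v # ws\<close>
        by (simp add: Hh_def dderiv_Lm case_prod_beta continuous_on_const)
    qed
  qed
  then show "continuous_on (({0..1} \<times> {0..1}) \<times> X1) (\<lambda>(p, z). dderiv vs (Hh p) z)"
    using continuous_on_subset by blast
qed


lemma Hh_start:
  assumes "0 \<le> t" "t \<le> 1"
  shows "Hh (0, t) z = Phi_loop t z"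
proof (cases "t \<le> 1/2")
  case True
  then have m: "min (2 * t) 1 = 2 * t" "max (2 * t - 1) 0 = 0" by auto
  have h: "Hh (0, t) = Lm (cis (4 * pi * t)) 0 (cis (4 * pi * t))"
    by (simp add: Hh_def aa_def bb_def m mult.assoc)
  have l: "Lm (cis (4 * pi * t)) 0 (cis (4 * pi * t)) z = (cis (4 * pi * t) * fst z, snd z)"
    unfolding Lm_def using cis_cnj_mult[of "4 * pi * t"] by simp
  have p: "Phi_loop t z = (exp (\<i> * complex_of_real (4 * pi * t)) * fst z, snd z)"
    using True by (cases z) (simp add: Phi_loop_def)
  have e: "exp (\<i> * complex_of_real (4 * pi * t)) = cis (4 * pi * t)"
    by (simp add: cis_conv_exp)
  show ?thesis unfolding h l p e ..
next
  case False
  then have m: "min (2 * t) 1 = 1" "max (2 * t - 1) 0 = 2 * t - 1" by auto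
  have c1: "cis (2 * pi * 1) = 1" by simp
  have "cis (2 * pi * (1 - (2 * t - 1))) = cis (2 * pi * 2) * cis (- (4 * pi * t))"
    by (simp add: cis_mult algebra_simps)
  also have "\<dots> = cis (- (4 * pi * t))"
    using cis_multiple_2pi[of 2] by simp
  also have "\<dots> = exp (- \<i> * complex_of_real (4 * pi * t))"
    by (simp add: cis_conv_exp)
  finally have e: "cis (2 * pi * (1 - (2 * t - 1))) = exp (- \<i> * complex_of_real (4 * pi * t))" .
  have h: "Hh (0, t) = Lm 1 0 (cis (2 * pi * (1 - (2 * t - 1))))"
    using c1 by (simp add: Hh_def aa_def bb_def m)
  have l: "Lm 1 0 (cis (2 * pi * (1 - (2 * t - 1)))) z = (fst z, cis (2 * pi * (1 - (2 * t - 1))) * snd z)"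
    unfolding Lm_def by simp
  have p: "Phi_loop t z = (fst z, exp (- \<i> * complex_of_real (4 * pi * t)) * snd z)"
    using False by (cases z) (simp add: Phi_loop_def)
  have "Hh (0, t) z = (fst z, cis (2 * pi * (1 - (2 * t - 1))) * snd z)" using h l by simp
  then show ?thesis using p e by simp
qed

lemma Hh_closed: "Hh (s, 0) z = Hh (s, 1) z"
proof -
  have "cis (2 * pi * 1) = 1" by simp
  then show ?thesis by (simp add: Hh_def Lm_def aa_def bb_def)
qed

lemma Hh_end: "Hh (1, t) z = Hh (1, 0) z"
  by (simp add: Hh_def Lm_def aa_def bb_def)

theorem proposition1p10:
  fixes X1 X2 :: "C2 set" and r :: real
  assumes "convex_toric_domain X1" and "convex_toric_domain X2"
    and "r > 0" and "X1 \<subseteq> ball4 r" and "ball4 r \<subseteq> X2"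
  shows "contractible_loop_SympEmb X1 X2 (\<lambda>t. restrict (Phi_loop t) X1)"
  unfolding contractible_loop_SympEmb_def
  apply (rule exI[of _ Hh])
  using Hh_family[OF assms(4,5)] Hh_start Hh_closed Hh_end by auto

end
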